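(* Let $\nabla$ be an ES basic fusion operator with representing basic assignment $\Phi\mapsto\succeq_\Phi$. The following are equivalent: (i) $\nabla$ satisfies (ESF-D); (ii) for every society $N$ there is $d_N\in N$ such that for every $N$-profile $\Phi$ and every $E\in\mathcal E$ with $|[\![B(E)]\!]|\le 2$, $B(\nabla(\Phi,E))\vdash B(\nabla(E_{d_N},E))$; (iii) for every society $N$ there is $d_N\in N$ such that for every $N$-profile $\Phi$ and all interpretations $w,w'$, if $w\succ_{E_{d_N}}w'$ then $w\succ_\Phi w'$.
   Context: Setting: epistemic space $(\mathcal E,B,\mathcal L_{\mathcal P})$ ($\mathcal E$ nonempty, $B:\mathcal E\to$ propositional formulas over finite $\mathcal P$, image modulo equivalence exactly the consistent formulas; $\mathcal W_{\mathcal P}$ valuations, $[\![\phi]\!]$ models); agents: well-ordered set $\mathcal S$; society: nonempty finite $N\subseteq\mathcal S$; $N$-profile $\Phi:N\to\mathcal E$, $E_i=\Phi(i)$, identified with $E_i$ if $N=\{i\}$; profiles on $\{i_1<\dots<i_n\}$, $\{j_1<\dots<j_m\}$ equivalent if $n=m$ and entries coincide position-wise. ES basic fusion operator: a map $\nabla(\Phi,E)\in\mathcal E$ with (ESF1) $B(\nabla(\Phi,E))\vdash B(E)$; (ESF2) equivalent profiles and $B(E)\equiv B(E')$ give equivalent $B(\nabla)$; (ESF3) if $B(E)\equiv B(E')\wedge B(E'')$ then $B(\nabla(\Phi,E'))\wedge B(E'')\vdash B(\nabla(\Phi,E))$; (ESF4) if moreover $B(\nabla(\Phi,E'))\wedge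 B(E'')\nvdash\bot$ then $B(\nabla(\Phi,E))\vdash B(\nabla(\Phi,E'))\wedge B(E'')$. Representing basic assignment: the unique $\Phi\mapsto\succeq_\Phi$ (total preorders on $\mathcal W_{\mathcal P}$, $\succ$ strict part, equal on equivalent profiles) with $[\![B(\nabla(\Phi,E))]\!]=\max([\![B(E)]\!],\succeq_\Phi)$, $\max(C,\succeq)=\{c\in C:c\succeq x\ \forall x\in C\}$. (ESF-D): for every society $N$ there exists $d_N\in N$ such that for every $N$-profile $\Phi$ and every $E$, $B(\nabla(\Phi,E))\vdash B(\nabla(E_{d_N},E))$. *)

theory Defs
  imports Main
begin

datatype 'p fm = FAtom 'p | FBot | FNeg "'p fm" | FAnd "'p fm" "'p fm"
  | FOr "'p fm" "'p fm" | FImp "'p fm" "'p fm"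

fun sat :: "'p set \<Rightarrow> 'p fm \<Rightarrow> bool" where
  "sat v (FAtom p) = (p \<in> v)"
| "sat v FBot = False"
| "sat v (FNeg f) = (\<not> sat v f)"
| "sat v (FAnd f g) = (sat v f \<and> sat v g)"
| "sat v (FOr f g) = (sat v f \<or> sat v g)"
| "sat v (FImp f g) = (sat v f \<longrightarrow> sat v g)"

definition models :: "'p fm \<Rightarrow> 'p set set" where
  "models f = {v. sat v f}"

definition entails :: "'p fm \<Rightarrow> 'p fm \<Rightarrow> bool" where
  "entails f g = (\<forall>v. sat v f \<longrightarrow> sat v g)"

definition fequiv :: "'p fm \<Rightarrow> 'p fm \<Rightarrow> bool" where
  "fequiv f g = (entails f g \<and> entails g f)"

definition consistent :: "'p fm \<Rightarrow> bool" where
  "consistent f = (\<not> entails f FBot)"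

definition epistemic_space :: "('e \<Rightarrow> 'p fm) \<Rightarrow> bool" where
  "epistemic_space B =
     ((\<forall>E. consistent (B E)) \<and> (\<forall>f. consistent f \<longrightarrow> (\<exists>E. fequiv (B E) f)))"

text \<open>Agents: the well-ordered type 's. A society is a nonempty finite set of agents.
  An N-profile is represented by a function 's \<Rightarrow> 'e whose values outside N are irrelevant.\<close>
definition society :: "'s set \<Rightarrow> bool" where
  "society N = (finite N \<and> N \<noteq> {})"

definition prof_equiv :: "'s::linorder set \<Rightarrow> ('s \<Rightarrow> 'e) \<Rightarrow> 's set \<Rightarrow> ('s \<Rightarrow> 'e) \<Rightarrow> bool" where
  "prof_equiv N \<Phi> M \<Psi> = (map \<Phi> (sorted_list_of_set N) = map \<Psi> (sorted_list_of_set M))"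

definition es_basic_fusion ::
  "('e \<Rightarrow> 'p fm) \<Rightarrow> ('s::wellorder set \<Rightarrow> ('s \<Rightarrow> 'e) \<Rightarrow> 'e \<Rightarrow> 'e) \<Rightarrow> bool" where
  "es_basic_fusion B nabla =
    ((\<forall>N \<Phi> E. society N \<longrightarrow> entails (B (nabla N \<Phi> E)) (B E)) \<and>
     (\<forall>N \<Phi> M \<Psi> E E'. society N \<longrightarrow> society M \<longrightarrow> prof_equiv N \<Phi> M \<Psi> \<longrightarrow>
        fequiv (B E) (B E') \<longrightarrow> fequiv (B (nabla N \<Phi> E)) (B (nabla M \<Psi> E'))) \<and>
     (\<forall>N \<Phi> E E' E''. society N \<longrightarrow> fequiv (B E) (FAnd (B E') (B E'')) \<longrightarrow>
        entails (FAnd (B (nabla N \<Phi> E')) (B E'')) (B (nabla N \<Phi> E))) \<and>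
     (\<forall>N \<Phi> E E' E''. society N \<longrightarrow> fequiv (B E) (FAnd (B E') (B E'')) \<longrightarrow>
        consistent (FAnd (B (nabla N \<Phi> E')) (B E'')) \<longrightarrow>
        entails (B (nabla N \<Phi> E)) (FAnd (B (nabla N \<Phi> E')) (B E''))))"

definition total_preorder :: "('w \<Rightarrow> 'w \<Rightarrow> bool) \<Rightarrow> bool" where
  "total_preorder R = ((\<forall>x y. R x y \<or> R y x) \<and> (\<forall>x y z. R x y \<longrightarrow> R y z \<longrightarrow> R x z))"

definition strict :: "('w \<Rightarrow> 'w \<Rightarrow> bool) \<Rightarrow> 'w \<Rightarrow> 'w \<Rightarrow> bool" where
  "strict R x y = (R x y \<and> \<not> R y x)"

definition maxel :: "'w set \<Rightarrow> ('w \<Rightarrow> 'w \<Rightarrow> bool) \<Rightarrow> 'w set" where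
  "maxel C R = {c \<in> C. \<forall>x \<in> C. R c x}"

definition represents ::
  "('e \<Rightarrow> 'p fm) \<Rightarrow> ('s::wellorder set \<Rightarrow> ('s \<Rightarrow> 'e) \<Rightarrow> 'e \<Rightarrow> 'e)
   \<Rightarrow> ('s set \<Rightarrow> ('s \<Rightarrow> 'e) \<Rightarrow> 'p set \<Rightarrow> 'p set \<Rightarrow> bool) \<Rightarrow> bool" where
  "represents B nabla pre =
    ((\<forall>N \<Phi>. society N \<longrightarrow> total_preorder (pre N \<Phi>)) \<and>
     (\<forall>N \<Phi> M \<Psi>. society N \<longrightarrow> society M \<longrightarrow> prof_equiv N \<Phi> M \<Psi> \<longrightarrow> pre N \<Phi> = pre M \<Psi>) \<and>
     (\<forall>N \<Phi> E. society N \<longrightarrow>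
        models (B (nabla N \<Phi> E)) = maxel (models (B E)) (pre N \<Phi>)))"

end

theory Submission
  imports Defs
begin

fun chr :: "'p list \<Rightarrow> 'p set \<Rightarrow> 'p fm" where
  "chr [] w = FImp FBot FBot"
| "chr (p # xs) w = FAnd (if p \<in> w then FAtom p else FNeg (FAtom p)) (chr xs w)"

lemma sat_chr: "sat v (chr xs w) \<longleftrightarrow> (\<forall>p\<in>set xs. p \<in> v \<longleftrightarrow> p \<in> w)"
  by (induction xs) auto

lemma sat_chr_univ:
  assumes "set xs = (UNIV :: 'p set)"
  shows "sat v (chr xs w) \<longleftrightarrow> v = w"
  using assms by (auto simp: sat_chr)

lemma two_models:
  fixes B :: "'e \<Rightarrow> ('p::finite) fm"
  assumes "epistemic_space B"
  shows "\<exists>E. models (B E) = {w, w'}"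
proof -
  obtain xs :: "'p list" where xs: "set xs = UNIV" using finite_list[of "UNIV :: 'p set"] by auto
  define f where "f = FOr (chr xs w) (chr xs w')"
  have sf: "sat v f \<longleftrightarrow> v = w \<or> v = w'" for v
    using sat_chr_univ[OF xs] by (simp add: f_def)
  have "consistent f" using sf unfolding consistent_def entails_def by auto
  then obtain E where "fequiv (B E) f" using assms unfolding epistemic_space_def by blast
  then have "models (B E) = {w, w'}"
    using sf unfolding fequiv_def entails_def models_def by auto
  then show ?thesis by blast
qed

lemma entails_models: "entails f g \<longleftrightarrow> models f \<subseteq> models g"
  unfolding entails_def models_def by auto

theorem mainTheorem13:
  fixes B :: "'e \<Rightarrow> ('p::finite) fm"
    and nabla :: "'s::wellorder set \<Rightarrow> ('s \<Rightarrow> 'e) \<Rightarrow> 'e \<Rightarrow> 'e"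
    and pre :: "'s set \<Rightarrow> ('s \<Rightarrow> 'e) \<Rightarrow> 'p set \<Rightarrow> 'p set \<Rightarrow> bool"
  assumes "epistemic_space B"
    and "es_basic_fusion B nabla"
    and "represents B nabla pre"
  shows "((\<forall>N. society N \<longrightarrow> (\<exists>d\<in>N. \<forall>\<Phi> E.
              entails (B (nabla N \<Phi> E)) (B (nabla {d} \<Phi> E))))
          \<longleftrightarrow>
          (\<forall>N. society N \<longrightarrow> (\<exists>d\<in>N. \<forall>\<Phi> E. card (models (B E)) \<le> 2 \<longrightarrow>
              entails (B (nabla N \<Phi> E)) (B (nabla {d} \<Phi> E)))))
       \<and> ((\<forall>N. society N \<longrightarrow> (\<exists>d\<in>N. \<forall>\<Phi> E.
              entails (B (nabla N \<Phi> E)) (B (nabla {d} \<Phi> E))))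
          \<longleftrightarrow>
          (\<forall>N. society N \<longrightarrow> (\<exists>d\<in>N. \<forall>\<Phi> w w'.
              strict (pre {d} \<Phi>) w w' \<longrightarrow> strict (pre N \<Phi>) w w')))"
proof -
  have rep: "\<And>N \<Phi> E. society N \<Longrightarrow> models (B (nabla N \<Phi> E)) = maxel (models (B E)) (pre N \<Phi>)"
    and tp: "\<And>N \<Phi>. society N \<Longrightarrow> total_preorder (pre N \<Phi>)"
    using assms(3) unfolding represents_def by blast+
  have sd: "society {d}" for d :: 's unfolding society_def by simp
  have i_ii: "(\<forall>\<Phi> E. entails (B (nabla N \<Phi> E)) (B (nabla {d} \<Phi> E))) \<Longrightarrow>
     (\<forall>\<Phi> E. card (models (B E)) \<le> 2 \<longrightarrow> entails (B (nabla N \<Phi> E)) (B (nabla {d} \<Phi> E)))"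
    for N d by blast
  have ii_iii: "(\<forall>\<Phi> w w'. strict (pre {d} \<Phi>) w w' \<longrightarrow> strict (pre N \<Phi>) w w')"
    if N: "society N" and H: "\<forall>\<Phi> E. card (models (B E)) \<le> 2 \<longrightarrow>
       entails (B (nabla N \<Phi> E)) (B (nabla {d} \<Phi> E))" for N d
  proof (intro allI impI)
    fix \<Phi> w w'
    assume st: "strict (pre {d} \<Phi>) w w'"
    obtain E where E: "models (B E) = {w, w'}" using two_models[OF assms(1)] by blast
    have "card (models (B E)) \<le> 2" unfolding E by (simp add: card_insert_if)
    with H have "models (B (nabla N \<Phi> E)) \<subseteq> models (B (nabla {d} \<Phi> E))"
      by (simp add: entails_models)
    hence sub: "maxel {w, w'} (pre N \<Phi>) \<subseteq> maxel {w, w'} (pre {d} \<Phi>)"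
      using rep[OF N] rep[OF sd] E by simp
    have "w' \<notin> maxel {w, w'} (pre {d} \<Phi>)" using st unfolding strict_def maxel_def by auto
    hence "w' \<notin> maxel {w, w'} (pre N \<Phi>)" using sub by blast
    hence "\<not> pre N \<Phi> w' w" using tp[OF N, of \<Phi>] unfolding maxel_def total_preorder_def by auto
    then show "strict (pre N \<Phi>) w w'" using tp[OF N, of \<Phi>] unfolding strict_def total_preorder_def by blast
  qed
  have iii_i: "\<forall>\<Phi> E. entails (B (nabla N \<Phi> E)) (B (nabla {d} \<Phi> E))"
    if N: "society N" and H: "\<forall>\<Phi> w w'. strict (pre {d} \<Phi>) w w' \<longrightarrow> strict (pre N \<Phi>) w w'" for N d
  proof (intro allI)
    fix \<Phi> E
    have "maxel (models (B E)) (pre N \<Phi>) \<subseteq> maxel (models (B E)) (pre {d} \<Phi>)"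
    proof
      fix c assume c: "c \<in> maxel (models (B E)) (pre N \<Phi>)"
      show "c \<in> maxel (models (B E)) (pre {d} \<Phi>)"
      proof (rule ccontr)
        assume "c \<notin> maxel (models (B E)) (pre {d} \<Phi>)"
        then obtain x where x: "x \<in> models (B E)" "\<not> pre {d} \<Phi> c x" using c unfolding maxel_def by auto
        hence "strict (pre {d} \<Phi>) x c" using tp[OF sd, of d \<Phi>] unfolding strict_def total_preorder_def by blast
        hence "strict (pre N \<Phi>) x c" using H by blast
        thus False using c x unfolding maxel_def strict_def by auto
      qed
    qed
    then show "entails (B (nabla N \<Phi> E)) (B (nabla {d} \<Phi> E))"
      using rep[OF N] rep[OF sd] by (simp add: entails_models)
  qed
  show ?thesis
  proof (intro conjI iffI allI impI)
    fix N :: "'s set" assume "society N" and "\<forall>N. society N \<longrightarrow> (\<exists>d\<in>N. \<forall>\<Phi> E.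
              entails (B (nabla N \<Phi> E)) (B (nabla {d} \<Phi> E)))"
    then show "\<exists>d\<in>N. \<forall>\<Phi> E. card (models (B E)) \<le> 2 \<longrightarrow> entails (B (nabla N \<Phi> E)) (B (nabla {d} \<Phi> E))"
      using i_ii by blast
  next
    fix N :: "'s set" assume N: "society N" and "\<forall>N. society N \<longrightarrow> (\<exists>d\<in>N. \<forall>\<Phi> E. card (models (B E)) \<le> 2 \<longrightarrow>
              entails (B (nabla N \<Phi> E)) (B (nabla {d} \<Phi> E)))"
    then obtain d where "d \<in> N" "\<forall>\<Phi> E. card (models (B E)) \<le> 2 \<longrightarrow>
              entails (B (nabla N \<Phi> E)) (B (nabla {d} \<Phi> E))" by blast
    then show "\<exists>d\<in>N. \<forall>\<Phi> E. entails (B (nabla N \<Phi> E)) (B (nabla {d} \<Phi> E))"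
      using ii_iii[OF N] iii_i[OF N] by blast
  next
    fix N :: "'s set" assume N: "society N" and "\<forall>N. society N \<longrightarrow> (\<exists>d\<in>N. \<forall>\<Phi> E.
              entails (B (nabla N \<Phi> E)) (B (nabla {d} \<Phi> E)))"
    then obtain d where "d \<in> N" "\<forall>\<Phi> E. entails (B (nabla N \<Phi> E)) (B (nabla {d} \<Phi> E))" by blast
    then show "\<exists>d\<in>N. \<forall>\<Phi> w w'. strict (pre {d} \<Phi>) w w' \<longrightarrow> strict (pre N \<Phi>) w w'"
      using ii_iii[OF N] i_ii by blast
  next
    fix N :: "'s set" assume N: "society N" and "\<forall>N. society N \<longrightarrow> (\<exists>d\<in>N. \<forall>\<Phi> w w'.
              strict (pre {d} \<Phi>) w w' \<longrightarrow> strict (pre N \<Phi>) w w')"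
    then show "\<exists>d\<in>N. \<forall>\<Phi> E. entails (B (nabla N \<Phi> E)) (B (nabla {d} \<Phi> E))"
      using iii_i[OF N] by blast
  qed
qed

end
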